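(* Let $n\ge2$, $1\le k\le n-1$, and let $X$ be a continuous random variable. Then \[ E[X(n)\mid X(n-k)=u,\ X(n+1)=v]=\frac{u+kv}{k+1}\qquad (l_F<u<v<r_F) \] if and only if $l_F>-\infty$, $r_F=\infty$ and $F(x)=1-e^{-c(x-l_F)}$ for $x\ge l_F$, for some constant $c>0$.
   Context: $X_1,X_2,\dots$ are i.i.d. copies of $X$ with distribution function $F$; $l_F=\inf\{x:F(x)>0\}$, $r_F=\sup\{x:F(x)<1\}$. Upper record times: $L(1)=1$, $L(m)=\min\{j>L(m-1): X_j>X_{L(m-1)}\}$; upper record values $X(m)=X_{L(m)}$. With $R(x)=-\ln(1-F(x))$, conditional expectations given $X(n-k)=u$, $X(n+r)=v$ are taken with respect to the conditional density $\frac{(k+r-1)!}{(k-1)!(r-1)!}[\frac{R(t)-R(u)}{R(v)-R(u)}]^{k-1}[\frac{R(v)-R(t)}{R(v)-R(u)}]^{r-1}\frac{R'(t)}{R(v)-R(u)}$, $u<t<v$. *)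

theory Defs
  imports "HOL-Probability.Probability"
begin

definition lF :: "(real \<Rightarrow> real) \<Rightarrow> ereal" where
  "lF F = Inf {ereal x | x. F x > 0}"

definition rF :: "(real \<Rightarrow> real) \<Rightarrow> ereal" where
  "rF F = Sup {ereal x | x. F x < 1}"

definition recR :: "(real \<Rightarrow> real) \<Rightarrow> real \<Rightarrow> real" where
  "recR F x = - ln (1 - F x)"

text \<open>Conditional density of X(n+j) given X(n-k) = u and X(n+r) = v (here with the
  position of the record between them determined by k and r as in the paper).  For
  an absolutely continuous F with density f, R'(t) = f t / (1 - F t) (a.e.).\<close>
definition rec_cond_density ::
  "(real \<Rightarrow> real) \<Rightarrow> (real \<Rightarrow> real) \<Rightarrow> nat \<Rightarrow> nat \<Rightarrow> real \<Rightarrow> real \<Rightarrow> real \<Rightarrow> real" where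
  "rec_cond_density F f k r u v t =
     fact (k + r - 1) / (fact (k - 1) * fact (r - 1))
     * ((recR F t - recR F u) / (recR F v - recR F u)) ^ (k - 1)
     * ((recR F v - recR F t) / (recR F v - recR F u)) ^ (r - 1)
     * ((f t / (1 - F t)) / (recR F v - recR F u))"

definition rec_cond_exp ::
  "(real \<Rightarrow> real) \<Rightarrow> (real \<Rightarrow> real) \<Rightarrow> nat \<Rightarrow> nat \<Rightarrow> real \<Rightarrow> real \<Rightarrow> real" where
  "rec_cond_exp F f k r u v =
     (LBINT t:{u<..<v}. t * rec_cond_density F f k r u v t)"

end

theory Submission
  imports Defs
begin


lemma small_steps:
  fixes g :: "real \<Rightarrow> real"
  assumes eta: "\<eta> > 0" and uv: "u \<le> v"
    and step: "\<And>a b. u \<le> a \<Longrightarrow> a \<le> b \<Longrightarrow> b \<le> v \<Longrightarrow> b - a < \<eta> \<Longrightarrow> g b \<le> g a"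
  shows "g v \<le> g u"
proof -
  have P: "\<forall>b. u \<le> b \<and> b \<le> v \<and> b - u \<le> real n * (\<eta>/2) \<longrightarrow> g b \<le> g u" for n
  proof (induction n)
    case 0 then show ?case by auto
  next
    case (Suc n)
    show ?case
    proof (intro allI impI)
      fix b assume b: "u \<le> b \<and> b \<le> v \<and> b - u \<le> real (Suc n) * (\<eta>/2)"
      show "g b \<le> g u"
      proof (cases "b - u \<le> real n * (\<eta>/2)")
        case True then show ?thesis using Suc b by auto
      next
        case False
        define a where "a = u + real n * (\<eta>/2)"
        have "u \<le> a" using eta unfolding a_def by auto
        moreover have "a \<le> b" using False unfolding a_def by auto
        moreover have "b - a < \<eta>" using b eta unfolding a_def by (auto simp: algebra_simps)
        ultimately have "g b \<le> g a" using step b by auto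
        moreover have "g a \<le> g u" using Suc \<open>u \<le> a\<close> \<open>a \<le> b\<close> b unfolding a_def by auto
        ultimately show ?thesis by auto
      qed
    qed
  qed
  obtain n where "(v - u) / (\<eta>/2) \<le> real n" using real_arch_simple by blast
  then have "v - u \<le> real n * (\<eta>/2)" using eta by (simp add: divide_le_eq)
  then show ?thesis using P uv by auto
qed

lemma eps_zero:
  fixes x C :: real
  assumes "\<And>e. e > 0 \<Longrightarrow> \<bar>x\<bar> \<le> e * C"
  shows "x = 0"
proof -
  have "\<bar>x\<bar> \<le> 0"
  proof (rule field_le_epsilon)
    fix e :: real assume e: "e > 0"
    show "\<bar>x\<bar> \<le> 0 + e"
    proof (cases "C > 0")
      case True
      have "\<bar>x\<bar> \<le> e / C * C" using assms[of "e / C"] e True by simp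
      then show ?thesis using True by simp
    next
      case False
      have "\<bar>x\<bar> \<le> 1 * C" using assms[of 1] by simp
      then show ?thesis using False e by linarith
    qed
  qed
  then show ?thesis by auto
qed



lemma Fmono_lemma:
  fixes f F :: "real \<Rightarrow> real"
  assumes fpos: "\<And>x. f x \<ge> 0"
    and Fint: "\<And>a b. a \<le> b \<Longrightarrow> (LBINT t:{a<..b}. f t) = F b - F a"
    and ab: "a \<le> b"
  shows "F a \<le> F b"
proof -
  have "0 \<le> (LBINT t:{a<..b}. f t)"
    unfolding set_lebesgue_integral_def by (rule integral_nonneg_AE) (auto simp: fpos indicator_def)
  then show ?thesis using Fint[OF ab] by simp
qed

lemma int_lemma:
  fixes f h :: "real \<Rightarrow> real"
  assumes fmeas: "f \<in> borel_measurable borel"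
    and fint: "\<And>a b. set_integrable lborel {a<..b} f"
    and hc: "continuous_on {u..v} h"
    and sub: "u \<le> a" "b \<le> v"
  shows "set_integrable lborel {a<..b} (\<lambda>t. h t * f t)"
proof -
  obtain B where B: "\<And>t. t \<in> {u..v} \<Longrightarrow> norm (h t) \<le> B"
    using compact_imp_bounded[OF compact_continuous_image[OF hc compact_Icc]]
    unfolding bounded_iff by (metis atLeastAtMost_iff image_eqI)
  have meas: "(\<lambda>t. indicator {u..v} t *\<^sub>R h t) \<in> borel_measurable borel"
    by (rule borel_measurable_continuous_on_indicator) (auto simp: hc)
  show ?thesis
  proof (rule set_integrable_bound[where f="\<lambda>t. B * f t"])
    show "set_integrable lborel {a<..b} (\<lambda>t. B * f t)"
      using fint by (rule set_integrable_mult_right)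
    have "(\<lambda>x. indicator {a<..b} x *\<^sub>R (h x * f x)) =
          (\<lambda>x. (indicator {u..v} x *\<^sub>R h x) * (indicator {a<..b} x * f x))"
      using sub by (auto simp: indicator_def fun_eq_iff)
    also have "\<dots> \<in> borel_measurable lborel"
      using meas fmeas by measurable
    finally show "set_borel_measurable lborel {a<..b} (\<lambda>t. h t * f t)"
      unfolding set_borel_measurable_def .
    show "AE x in lborel. x \<in> {a<..b} \<longrightarrow> norm (h x * f x) \<le> norm (B * f x)"
    proof (rule AE_I2, rule impI)
      fix x assume "x \<in> {a<..b}"
      then have "norm (h x) \<le> B" using B sub by auto
      then show "norm (h x * f x) \<le> norm (B * f x)"
        by (simp add: abs_mult mult_right_mono)
    qed
  qed
qed


lemma key_lemma:
  fixes f F q Q :: "real \<Rightarrow> real"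
  assumes fpos: "\<And>x. f x \<ge> 0" and fmeas: "f \<in> borel_measurable borel"
    and fint: "\<And>a b. set_integrable lborel {a<..b} f"
    and Fint: "\<And>a b. a \<le> b \<Longrightarrow> (LBINT t:{a<..b}. f t) = F b - F a"
    and Fcont: "continuous_on UNIV F"
    and uv: "u \<le> v"
    and qc: "continuous_on {F u..F v} q"
    and QD: "\<And>y. y \<in> {F u..F v} \<Longrightarrow> (Q has_real_derivative q y) (at y)"
  shows "set_integrable lborel {u<..v} (\<lambda>t. q (F t) * f t)"
    and "(LBINT t:{u<..v}. q (F t) * f t) = Q (F v) - Q (F u)"
proof -
  have Fmono: "\<And>a b. a \<le> b \<Longrightarrow> F a \<le> F b"
    using Fmono_lemma[OF fpos Fint] by blast
  have qFc: "continuous_on {u..v} (\<lambda>t. q (F t))"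
    by (rule continuous_on_compose2[OF qc continuous_on_subset[OF Fcont]]) (auto intro: Fmono)
  have INT: "\<And>a b. u \<le> a \<Longrightarrow> b \<le> v \<Longrightarrow> set_integrable lborel {a<..b} (\<lambda>t. q (F t) * f t)"
    by (rule int_lemma[OF fmeas fint qFc])
  then show "set_integrable lborel {u<..v} (\<lambda>t. q (F t) * f t)" by simp
  define I where "I x = (LBINT t:{u<..x}. q (F t) * f t)" for x
  have Isplit: "I b = I a + (LBINT t:{a<..b}. q (F t) * f t)" if "u \<le> a" "a \<le> b" "b \<le> v" for a b
  proof -
    have "{u<..b} = {u<..a} \<union> {a<..b}" using that by auto
    moreover have "{u<..a} \<inter> {a<..b} = {}" by auto
    ultimately show ?thesis unfolding I_def
      using set_integral_Un[of "{u<..a}" "{a<..b}" lborel "\<lambda>t. q (F t) * f t"] INT[of u a] INT[of a b] that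
      by auto
  qed
  have Iu: "I u = 0" unfolding I_def by (simp add: set_lebesgue_integral_def)
  have bound: "\<exists>\<eta>>0. \<forall>a b. u \<le> a \<longrightarrow> a \<le> b \<longrightarrow> b \<le> v \<longrightarrow> b - a < \<eta> \<longrightarrow>
      \<bar>(LBINT t:{a<..b}. q (F t) * f t) - (Q (F b) - Q (F a))\<bar> \<le> 2 * e * (F b - F a)"
    if e: "e > 0" for e
  proof -
    obtain \<delta> where d: "\<delta> > 0" and dq: "\<forall>x\<in>{F u..F v}. \<forall>x'\<in>{F u..F v}. dist x' x < \<delta> \<longrightarrow> dist (q x') (q x) < e"
      using compact_uniformly_continuous[OF qc compact_Icc] e unfolding uniformly_continuous_on_def by metis
    obtain \<eta> where eta: "\<eta> > 0" and dF: "\<forall>x\<in>{u..v}. \<forall>x'\<in>{u..v}. dist x' x < \<eta> \<longrightarrow> dist (F x') (F x) < \<delta>"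
      using compact_uniformly_continuous[OF continuous_on_subset[OF Fcont] compact_Icc] d
      unfolding uniformly_continuous_on_def by (metis subset_UNIV)
    show ?thesis
    proof (intro exI[of _ \<eta>] conjI allI impI eta)
      fix a b assume ab: "u \<le> a" "a \<le> b" "b \<le> v" "b - a < \<eta>"
      have Fab: "F u \<le> F a" "F a \<le> F b" "F b \<le> F v" using ab Fmono by auto
      have "\<bar>F b - F a\<bar> < \<delta>" using dF ab unfolding dist_real_def
        by (metis (no_types, lifting) abs_of_nonneg atLeastAtMost_iff diff_ge_0_iff_ge order.trans)
      then have Fd: "F b - F a < \<delta>" by simp
      have close: "\<bar>q y - q (F a)\<bar> < e" if "F a \<le> y" "y \<le> F b" for y
        using dq Fab Fd that by (auto simp: dist_real_def)
      have cl2: "\<bar>q (F t) - q (F a)\<bar> < e" if "t \<in> {a<..b}" for t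
        using close that Fmono by auto
      have intf: "set_integrable lborel {a<..b} (\<lambda>t. c * f t)" for c
        using fint by (rule set_integrable_mult_right)
      have up: "(LBINT t:{a<..b}. q (F t) * f t) \<le> (LBINT t:{a<..b}. (q (F a) + e) * f t)"
      proof (rule set_integral_mono[OF INT[OF ab(1) ab(3)] intf])
        fix t assume t: "t \<in> {a<..b}"
        have "q (F t) \<le> q (F a) + e" using cl2[OF t] by linarith
        then show "q (F t) * f t \<le> (q (F a) + e) * f t" using fpos[of t] by (rule mult_right_mono)
      qed
      have lo: "(LBINT t:{a<..b}. (q (F a) - e) * f t) \<le> (LBINT t:{a<..b}. q (F t) * f t)"
      proof (rule set_integral_mono[OF intf INT[OF ab(1) ab(3)]])
        fix t assume t: "t \<in> {a<..b}"
        have "q (F a) - e \<le> q (F t)" using cl2[OF t] by linarith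
        then show "(q (F a) - e) * f t \<le> q (F t) * f t" using fpos[of t] by (rule mult_right_mono)
      qed
      have up': "(LBINT t:{a<..b}. q (F t) * f t) \<le> (q (F a) + e) * (F b - F a)"
        using up Fint[OF ab(2)] by simp
      have lo': "(q (F a) - e) * (F b - F a) \<le> (LBINT t:{a<..b}. q (F t) * f t)"
        using lo Fint[OF ab(2)] by simp
      obtain z where z: "F a \<le> z" "z \<le> F b" "Q (F b) - Q (F a) = (F b - F a) * q z"
      proof (cases "F a < F b")
        case True
        from MVT2[OF True, of Q q] QD Fab obtain z where "z > F a" "z < F b" "Q (F b) - Q (F a) = (F b - F a) * q z"
          by fastforce
        then show ?thesis using that[of z] by (meson less_imp_le)
      next
        case False
        then have "F a = F b" using Fab by auto
        then show ?thesis using that[of "F a"] by auto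
      qed
      have cz: "\<bar>q z - q (F a)\<bar> < e" using close z by auto
      have "\<bar>(q z - q (F a)) * (F b - F a)\<bar> \<le> e * (F b - F a)"
        using cz Fab by (auto simp: abs_mult intro!: mult_right_mono)
      then show "\<bar>(LBINT t:{a<..b}. q (F t) * f t) - (Q (F b) - Q (F a))\<bar> \<le> 2 * e * (F b - F a)"
        using up' lo' z(3) Fab e
        by (auto simp: abs_le_iff algebra_simps)
    qed
  qed
  have "\<bar>I v - (Q (F v) - Q (F u))\<bar> \<le> e * (2 * (F v - F u))" if e: "e > 0" for e
  proof -
    obtain \<eta> where eta: "\<eta> > 0" and B: "\<forall>a b. u \<le> a \<longrightarrow> a \<le> b \<longrightarrow> b \<le> v \<longrightarrow> b - a < \<eta> \<longrightarrow>
      \<bar>(LBINT t:{a<..b}. q (F t) * f t) - (Q (F b) - Q (F a))\<bar> \<le> 2 * e * (F b - F a)"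
      using bound[OF e] by blast
    have "(\<lambda>x. I x - Q (F x) - 2 * e * F x) v \<le> (\<lambda>x. I x - Q (F x) - 2 * e * F x) u"
    proof (rule small_steps[OF eta uv])
      fix a b assume ab: "u \<le> a" "a \<le> b" "b \<le> v" "b - a < \<eta>"
      have "\<bar>(LBINT t:{a<..b}. q (F t) * f t) - (Q (F b) - Q (F a))\<bar> \<le> 2 * e * (F b - F a)"
        using B ab by blast
      then show "I b - Q (F b) - 2 * e * F b \<le> I a - Q (F a) - 2 * e * F a"
        using Isplit[OF ab(1-3)] by (simp add: abs_le_iff algebra_simps)
    qed
    moreover have "(\<lambda>x. - (I x - Q (F x) + 2 * e * F x)) v \<le> (\<lambda>x. - (I x - Q (F x) + 2 * e * F x)) u"
    proof (rule small_steps[OF eta uv])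
      fix a b assume ab: "u \<le> a" "a \<le> b" "b \<le> v" "b - a < \<eta>"
      have "\<bar>(LBINT t:{a<..b}. q (F t) * f t) - (Q (F b) - Q (F a))\<bar> \<le> 2 * e * (F b - F a)"
        using B ab by blast
      then show "- (I b - Q (F b) + 2 * e * F b) \<le> - (I a - Q (F a) + 2 * e * F a)"
        using Isplit[OF ab(1-3)] by (simp add: abs_le_iff algebra_simps)
    qed
    ultimately show ?thesis using Iu by (auto simp: abs_le_iff algebra_simps)
  qed
  then have "I v - (Q (F v) - Q (F u)) = 0" by (rule eps_zero)
  then show "(LBINT t:{u<..v}. q (F t) * f t) = Q (F v) - Q (F u)" unfolding I_def by simp
qed


lemma set_int_const_Ioc:
  fixes a b c :: real
  assumes "a \<le> b"
  shows "(LBINT t:{a<..b}. c) = c * (b - a)"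
  using assms by (simp add: set_integral_const)

lemma tweight_lemma:
  fixes w W :: "real \<Rightarrow> real"
  assumes uv: "u \<le> v"
    and Wc: "continuous_on {u..v} W"
    and Wmono: "\<And>a b. u \<le> a \<Longrightarrow> a \<le> b \<Longrightarrow> b \<le> v \<Longrightarrow> W a \<le> W b"
    and wpos: "\<And>t. t \<in> {u<..v} \<Longrightarrow> w t \<ge> 0"
    and wint: "\<And>a b. u \<le> a \<Longrightarrow> a \<le> b \<Longrightarrow> b \<le> v \<Longrightarrow> set_integrable lborel {a<..b} w"
    and wW: "\<And>a b. u \<le> a \<Longrightarrow> a \<le> b \<Longrightarrow> b \<le> v \<Longrightarrow> (LBINT t:{a<..b}. w t) = W b - W a"
  shows "set_integrable lborel {u<..v} (\<lambda>t. t * w t)"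
    and "(LBINT t:{u<..v}. t * w t) = v * W v - u * W u - (LBINT t:{u<..v}. W t)"
proof -
  have TWI: "set_integrable lborel {a<..b} (\<lambda>t. t * w t)" if ab: "u \<le> a" "a \<le> b" "b \<le> v" for a b
  proof (rule set_integrable_bound[where f="\<lambda>t. (\<bar>u\<bar> + \<bar>v\<bar>) * w t"])
    show "set_integrable lborel {a<..b} (\<lambda>t. (\<bar>u\<bar> + \<bar>v\<bar>) * w t)"
      using wint[OF ab] by (rule set_integrable_mult_right)
    have m: "(\<lambda>x. indicator {a<..b} x *\<^sub>R w x) \<in> borel_measurable lborel"
      using wint[OF ab] unfolding set_integrable_def by (rule borel_measurable_integrable)
    have "(\<lambda>x. indicator {a<..b} x *\<^sub>R (x * w x)) = (\<lambda>x. x * (indicator {a<..b} x *\<^sub>R w x))"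
      by (auto simp: fun_eq_iff)
    also have "\<dots> \<in> borel_measurable lborel" using m by measurable
    finally show "set_borel_measurable lborel {a<..b} (\<lambda>t. t * w t)"
      unfolding set_borel_measurable_def .
    show "AE x in lborel. x \<in> {a<..b} \<longrightarrow> norm (x * w x) \<le> norm ((\<bar>u\<bar> + \<bar>v\<bar>) * w x)"
    proof (rule AE_I2, rule impI)
      fix x assume x: "x \<in> {a<..b}"
      then have "w x \<ge> 0" using wpos ab by auto
      moreover have "\<bar>x\<bar> \<le> \<bar>u\<bar> + \<bar>v\<bar>" using x ab by auto
      ultimately show "norm (x * w x) \<le> norm ((\<bar>u\<bar> + \<bar>v\<bar>) * w x)"
        by (simp add: abs_mult mult_right_mono)
    qed
  qed
  then show "set_integrable lborel {u<..v} (\<lambda>t. t * w t)" using uv by simp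
  have WI: "set_integrable lborel {a<..b} W" if ab: "u \<le> a" "a \<le> b" "b \<le> v" for a b
    by (rule set_integrable_subset[OF borel_integrable_atLeastAtMost'[OF Wc]]) (use ab in auto)
  define \<Phi> where "\<Phi> x = (LBINT t:{u<..x}. t * w t) - x * W x + (LBINT t:{u<..x}. W t)" for x
  have split: "(LBINT t:{u<..b}. g t) = (LBINT t:{u<..a}. g t) + (LBINT t:{a<..b}. g t)"
    if ab: "u \<le> a" "a \<le> b" "b \<le> v" and gi: "\<And>a b. u \<le> a \<Longrightarrow> a \<le> b \<Longrightarrow> b \<le> v \<Longrightarrow> set_integrable lborel {a<..b} g"
    for a b and g :: "real \<Rightarrow> real"
  proof -
    have "{u<..b} = {u<..a} \<union> {a<..b}" using ab by auto
    moreover have "{u<..a} \<inter> {a<..b} = {}" by auto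
    ultimately show ?thesis
      using set_integral_Un[of "{u<..a}" "{a<..b}" lborel g] gi[of u a] gi[of a b] ab by auto
  qed
  have dPhi: "\<bar>\<Phi> b - \<Phi> a\<bar> \<le> (b - a) * (W b - W a)" if ab: "u \<le> a" "a \<le> b" "b \<le> v" for a b
  proof -
    have e1: "\<Phi> b - \<Phi> a = (LBINT t:{a<..b}. t * w t) - b * W b + a * W a + (LBINT t:{a<..b}. W t)"
      unfolding \<Phi>_def using split[OF ab, of "\<lambda>t. t * w t"] split[OF ab, of W] TWI WI by auto
    have intw: "set_integrable lborel {a<..b} (\<lambda>t. c * w t)" for c
      using wint[OF ab] by (rule set_integrable_mult_right)
    have i1: "(LBINT t:{a<..b}. t * w t) \<le> (LBINT t:{a<..b}. b * w t)"
      by (rule set_integral_mono[OF TWI[OF ab] intw]) (use ab wpos in \<open>auto intro!: mult_right_mono\<close>)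
    have i2: "(LBINT t:{a<..b}. a * w t) \<le> (LBINT t:{a<..b}. t * w t)"
      by (rule set_integral_mono[OF intw TWI[OF ab]]) (use ab wpos in \<open>auto intro!: mult_right_mono\<close>)
    have cI: "set_integrable lborel {a<..b} (\<lambda>t. c)" for c :: real
      using ab by (simp add: set_integrable_def)
    have i3: "(LBINT t:{a<..b}. W t) \<le> (LBINT t:{a<..b}. W b)"
      by (rule set_integral_mono[OF WI[OF ab] cI]) (use ab Wmono in auto)
    have i4: "(LBINT t:{a<..b}. W a) \<le> (LBINT t:{a<..b}. W t)"
      by (rule set_integral_mono[OF cI WI[OF ab]]) (use ab Wmono in auto)
    have i1': "(LBINT t:{a<..b}. t * w t) \<le> b * (W b - W a)" using i1 wW[OF ab] by simp
    have i2': "a * (W b - W a) \<le> (LBINT t:{a<..b}. t * w t)" using i2 wW[OF ab] by simp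
    have i3': "(LBINT t:{a<..b}. W t) \<le> W b * (b - a)" using i3 set_int_const_Ioc[OF ab(2)] by simp
    have i4': "W a * (b - a) \<le> (LBINT t:{a<..b}. W t)" using i4 set_int_const_Ioc[OF ab(2)] by simp
    have x1: "b * (W b - W a) - b * W b + a * W a + W b * (b - a) = (b - a) * (W b - W a)"
      by (simp add: algebra_simps)
    have x2: "a * (W b - W a) - b * W b + a * W a + W a * (b - a) = - ((b - a) * (W b - W a))"
      by (simp add: algebra_simps)
    show ?thesis using e1 i1' i2' i3' i4' x1 x2 by (simp add: abs_le_iff)
  qed
  have "\<bar>\<Phi> v - \<Phi> u\<bar> \<le> e * (W v - W u)" if e: "e > 0" for e
  proof -
    have st: "(b - a) * (W b - W a) \<le> e * (W b - W a)" if ab: "u \<le> a" "a \<le> b" "b \<le> v" "b - a < e" for a b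
      using ab Wmono[OF ab(1-3)] by (intro mult_right_mono) auto
    have "(\<lambda>x. \<Phi> x - e * W x) v \<le> (\<lambda>x. \<Phi> x - e * W x) u"
    proof (rule small_steps[OF e uv])
      fix a b assume ab: "u \<le> a" "a \<le> b" "b \<le> v" "b - a < e"
      show "\<Phi> b - e * W b \<le> \<Phi> a - e * W a"
        using dPhi[OF ab(1-3)] st[OF ab] by (simp add: abs_le_iff algebra_simps)
    qed
    moreover have "(\<lambda>x. - (\<Phi> x + e * W x)) v \<le> (\<lambda>x. - (\<Phi> x + e * W x)) u"
    proof (rule small_steps[OF e uv])
      fix a b assume ab: "u \<le> a" "a \<le> b" "b \<le> v" "b - a < e"
      show "- (\<Phi> b + e * W b) \<le> - (\<Phi> a + e * W a)"
        using dPhi[OF ab(1-3)] st[OF ab] by (simp add: abs_le_iff algebra_simps)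
    qed
    ultimately show ?thesis by (simp add: abs_le_iff algebra_simps)
  qed
  then have "\<Phi> v - \<Phi> u = 0" by (rule eps_zero)
  moreover have "\<Phi> u = - (u * W u)" unfolding \<Phi>_def by (simp add: set_lebesgue_integral_def)
  ultimately show "(LBINT t:{u<..v}. t * w t) = v * W v - u * W u - (LBINT t:{u<..v}. W t)"
    unfolding \<Phi>_def by simp
qed


lemma Ioo_Ioc_int:
  fixes g :: "real \<Rightarrow> real"
  assumes gi: "set_integrable lborel {u<..v} g" and uv: "u < v"
  shows "(LBINT t:{u<..<v}. g t) = (LBINT t:{u<..v}. g t)"
proof -
  have i1: "set_integrable lborel {u<..<v} g"
    by (rule set_integrable_subset[OF gi]) auto
  have c: "(LBINT t:{v}. g t) = (LBINT t:{v}. g v)"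
    by (rule set_lebesgue_integral_cong) auto
  have z: "(LBINT t:{v}. g t) = 0" unfolding c by (simp add: set_integral_const)
  have i2: "set_integrable lborel {v} g"
    by (rule set_integrable_subset[OF gi]) (use uv in auto)
  have "{u<..v} = {u<..<v} \<union> {v}" using uv by auto
  then have "(LBINT t:{u<..v}. g t) = (LBINT t:{u<..<v}. g t) + (LBINT t:{v}. g t)"
    using set_integral_Un[of "{u<..<v}" "{v}" lborel g] i1 i2 by auto
  then show ?thesis using z by simp
qed

lemma Q_deriv:
  fixes y c D :: real and k :: nat
  assumes "y < 1" "D \<noteq> 0"
  shows "((\<lambda>y. ((- ln (1 - y) - c) / D) ^ k) has_real_derivative
     (real k * ((- ln (1 - y) - c) / D) ^ (k - 1) * (1 / (1 - y) / D))) (at y)"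
proof -
  have g: "((\<lambda>y. (- ln (1 - y) - c) / D) has_real_derivative (1 / (1 - y) / D)) (at y)"
    using assms by (auto intro!: derivative_eq_intros simp: field_simps)
  show ?thesis
    by (rule DERIV_cong[OF DERIV_power[OF g]]) (simp add: algebra_simps)
qed


lemma exp_formula:
  fixes f F :: "real \<Rightarrow> real" and k :: nat
  assumes fpos: "\<And>x. f x \<ge> 0" and fmeas: "f \<in> borel_measurable borel"
    and fint: "\<And>a b. set_integrable lborel {a<..b} f"
    and Fint: "\<And>a b. a \<le> b \<Longrightarrow> (LBINT t:{a<..b}. f t) = F b - F a"
    and Fcont: "continuous_on UNIV F"
    and k: "1 \<le> k" and uv: "u < v" and Fv: "F v < 1" and Fuv: "F u < F v"
  shows "rec_cond_exp F f k 1 u v =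
     v - (LBINT t:{u<..v}. ((recR F t - recR F u) / (recR F v - recR F u)) ^ k)"
proof -
  have Fmono: "\<And>a b. a \<le> b \<Longrightarrow> F a \<le> F b"
    using Fmono_lemma[OF fpos Fint] by blast
  define D where "D = recR F v - recR F u"
  have Fu1: "F u < 1" using Fuv Fv by simp
  have D: "D > 0" unfolding D_def recR_def using Fuv Fv by simp
  define c where "c = recR F u"
  define Q where "Q y = ((- ln (1 - y) - c) / D) ^ k" for y
  define q where "q y = real k * ((- ln (1 - y) - c) / D) ^ (k - 1) * (1 / (1 - y) / D)" for y
  have QD: "(Q has_real_derivative q y) (at y)" if "y < 1" for y
    unfolding Q_def q_def using Q_deriv[OF that] D by simp
  have qc: "continuous_on {a..b} q" if "b < 1" for a b
    unfolding q_def using that D by (auto intro!: continuous_intros)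
  have Qc: "continuous_on {a..b} Q" if "b < 1" for a b
    using that by (intro continuous_at_imp_continuous_on ballI DERIV_isCont[OF QD]) auto
  have FltI: "F t < 1" if "t \<le> v" for t using Fmono[OF that] Fv by simp
  have KL: "set_integrable lborel {a<..b} (\<lambda>t. q (F t) * f t) \<and>
            (LBINT t:{a<..b}. q (F t) * f t) = Q (F b) - Q (F a)"
    if ab: "u \<le> a" "a \<le> b" "b \<le> v" for a b
  proof -
    have Fb: "F b < 1" using FltI ab by simp
    show ?thesis
      using key_lemma[OF fpos fmeas fint Fint Fcont ab(2) qc[OF Fb] QD] Fb by auto
  qed
  have base_nonneg: "0 \<le> (- ln (1 - y) - c) / D" if "F u \<le> y" "y < 1" for y
  proof -
    have "ln (1 - y) \<le> ln (1 - F u)" using that Fu1 by simp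
    then show ?thesis unfolding c_def recR_def using D by simp
  qed
  have Qmono: "Q y1 \<le> Q y2" if "F u \<le> y1" "y1 \<le> y2" "y2 < 1" for y1 y2
  proof -
    have "ln (1 - y2) \<le> ln (1 - y1)" using that by simp
    then have "(- ln (1 - y1) - c) / D \<le> (- ln (1 - y2) - c) / D"
      using D by (simp add: divide_right_mono)
    then show ?thesis unfolding Q_def
      by (rule power_mono) (use base_nonneg that in auto)
  qed
  have qpos: "0 \<le> q y" if "F u \<le> y" "y < 1" for y
    unfolding q_def using base_nonneg[OF that] that D by auto
  have Wc: "continuous_on {u..v} (\<lambda>t. Q (F t))"
    by (rule continuous_on_compose2[OF Qc[OF Fv] continuous_on_subset[OF Fcont]]) (auto intro: Fmono)
  note TW = tweight_lemma[of u v "\<lambda>t. Q (F t)" "\<lambda>t. q (F t) * f t", OF less_imp_le[OF uv] Wc]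
  have TW1: "set_integrable lborel {u<..v} (\<lambda>t. t * (q (F t) * f t))"
    and TW2: "(LBINT t:{u<..v}. t * (q (F t) * f t)) =
       v * Q (F v) - u * Q (F u) - (LBINT t:{u<..v}. Q (F t))"
    using TW[OF _ _ conjunct1[OF KL] conjunct2[OF KL]]
      Qmono Fmono FltI qpos fpos by (auto intro!: mult_nonneg_nonneg)
  have Qv: "Q (F v) = 1" unfolding Q_def c_def D_def recR_def using D unfolding D_def recR_def by simp
  have Qu: "Q (F u) = 0" unfolding Q_def c_def recR_def using k by simp
  have fk: "fact (k + 1 - 1) / (fact (k - 1) * fact (1 - 1)) = (real k :: real)"
  proof -
    obtain m where "k = Suc m" using k by (cases k) auto
    then show ?thesis by simp
  qed
  have dens: "t * rec_cond_density F f k 1 u v t = t * (q (F t) * f t)" for t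
    unfolding rec_cond_density_def q_def c_def D_def fk recR_def by (simp add: field_simps)
  have "rec_cond_exp F f k 1 u v = (LBINT t:{u<..<v}. t * (q (F t) * f t))"
    unfolding rec_cond_exp_def dens ..
  also have "\<dots> = (LBINT t:{u<..v}. t * (q (F t) * f t))"
    by (rule Ioo_Ioc_int[OF TW1 uv])
  also have "\<dots> = v - (LBINT t:{u<..v}. Q (F t))" using TW2 Qv Qu by simp
  also have "(LBINT t:{u<..v}. Q (F t)) = (LBINT t:{u<..v}. ((recR F t - recR F u) / (recR F v - recR F u)) ^ k)"
    unfolding Q_def c_def D_def recR_def ..
  finally show ?thesis .
qed


lemma setup_lemma:
  fixes M :: "'a measure" and X :: "'a \<Rightarrow> real" and f F :: "real \<Rightarrow> real"
  assumes P: "prob_space M"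
    and D: "distributed M lborel X (\<lambda>x. ennreal (f x))"
    and fpos: "\<And>x. f x \<ge> 0"
    and Fdef: "F = cdf (distr M borel X)"
  shows "f \<in> borel_measurable borel"
    and "\<And>a b. set_integrable lborel {a<..b} f"
    and "\<And>a b. a \<le> b \<Longrightarrow> (LBINT t:{a<..b}. f t) = F b - F a"
    and "continuous_on UNIV F"
    and "(F \<longlongrightarrow> 0) at_bot" and "(F \<longlongrightarrow> 1) at_top"
    and "\<And>x. 0 \<le> F x" and "\<And>x. F x \<le> 1"
proof -
  interpret prob_space M by (rule P)
  have fm: "f \<in> borel_measurable lborel"
    using distributed_real_measurable[OF _ D] fpos by simp
  then show fmeas: "f \<in> borel_measurable borel" by simp
  have Xm: "X \<in> measurable M borel"
    using D unfolding distributed_def by simp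
  interpret RD: real_distribution "distr M borel X"
    using Xm by simp
  have eqd: "distr M borel X = density lborel (\<lambda>x. ennreal (f x))"
  proof -
    have "distr M borel X = distr M lborel X" by (rule distr_cong) auto
    also have "\<dots> = density lborel (\<lambda>x. ennreal (f x))"
      using D by (rule distributed_distr_eq_density)
    finally show ?thesis .
  qed
  have fI: "integrable lborel f"
    using distributed_integrable[OF D, of "\<lambda>_. 1"] fpos by simp
  have sI: "set_integrable lborel A f" if "A \<in> sets borel" for A
    unfolding set_integrable_def using that fI
    by (intro integrable_mult_indicator) auto
  then show "\<And>a b. set_integrable lborel {a<..b} f" by simp
  have meas: "measure (distr M borel X) A = (LBINT t:A. f t)" if A: "A \<in> sets borel" for A
  proof -
    have "measure (distr M borel X) A = integral\<^sup>L (distr M borel X) (indicator A)"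
      using A by simp
    also have "\<dots> = integral\<^sup>L (density lborel (\<lambda>x. ennreal (f x))) (indicator A)"
      by (simp add: eqd)
    also have "\<dots> = integral\<^sup>L lborel (\<lambda>x. f x *\<^sub>R indicator A x)"
      by (rule integral_density) (use A fm fpos in auto)
    also have "\<dots> = (LBINT t:A. f t)"
      unfolding set_lebesgue_integral_def by (simp add: mult.commute)
    finally show ?thesis .
  qed
  show "\<And>a b. a \<le> b \<Longrightarrow> (LBINT t:{a<..b}. f t) = F b - F a"
  proof -
    fix a b :: real assume ab: "a \<le> b"
    show "(LBINT t:{a<..b}. f t) = F b - F a"
    proof (cases "a = b")
      case True then show ?thesis by (simp add: set_lebesgue_integral_def)
    next
      case False
      then have "a < b" using ab by simp
      then show ?thesis unfolding Fdef using RD.cdf_diff_eq meas[of "{a<..b}"] by simp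
    qed
  qed
  have "isCont F x" for x
  proof -
    have c: "(LBINT t:{x}. f t) = (LBINT t:{x}. f x)"
      by (rule set_lebesgue_integral_cong) auto
    have "measure (distr M borel X) {x} = 0"
      using meas[of "{x}"] c by (simp add: set_integral_const)
    then show ?thesis unfolding Fdef by (simp add: RD.isCont_cdf)
  qed
  then show "continuous_on UNIV F" by (simp add: continuous_at_imp_continuous_on)
  show "(F \<longlongrightarrow> 0) at_bot" unfolding Fdef by (rule RD.cdf_lim_at_bot)
  show "(F \<longlongrightarrow> 1) at_top" unfolding Fdef by (rule RD.cdf_lim_at_top_prob)
  show "\<And>x. 0 \<le> F x" unfolding Fdef by (rule RD.cdf_nonneg)
  show "\<And>x. F x \<le> 1" unfolding Fdef by (rule RD.cdf_bounded_prob)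
qed


lemma lF_le: "F x > 0 \<Longrightarrow> lF F \<le> ereal x"
  unfolding lF_def by (rule Inf_lower) auto

lemma lF_less_pos:
  assumes mono: "\<And>a b. a \<le> b \<Longrightarrow> F a \<le> F b" and "lF F < ereal x"
  shows "F x > 0"
proof -
  from assms(2) obtain y where "y \<in> {ereal x | x. F x > 0}" "y < ereal x"
    unfolding lF_def Inf_less_iff by blast
  then obtain y' where "F y' > 0" "y' < x" by auto
  then show ?thesis using mono[of y' x] by simp
qed

lemma lF_less_zero:
  assumes nn: "\<And>x. F x \<ge> 0" and "ereal x < lF F"
  shows "F x = 0"
proof -
  have "\<not> F x > 0" using lF_le[of F x] assms(2) by auto
  then show ?thesis using nn[of x] by linarith
qed

lemma rF_ge: "F x < 1 \<Longrightarrow> ereal x \<le> rF F"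
  unfolding rF_def by (rule Sup_upper) auto

lemma rF_less_lt1:
  assumes mono: "\<And>a b. a \<le> b \<Longrightarrow> F a \<le> F b" and "ereal x < rF F"
  shows "F x < 1"
proof -
  from assms(2) obtain y where "y \<in> {ereal x | x. F x < 1}" "ereal x < y"
    unfolding rF_def less_Sup_iff by blast
  then obtain y' where "F y' < 1" "x < y'" by auto
  then show ?thesis using mono[of x y'] by simp
qed

lemma rF_gt_one:
  assumes le1: "\<And>x. F x \<le> 1" and "rF F < ereal x"
  shows "F x = 1"
proof -
  have "\<not> F x < 1" using rF_ge[of F x] assms(2) by auto
  then show ?thesis using le1[of x] by linarith
qed

lemma poly_int:
  fixes u v :: real and k :: nat
  assumes uv: "u < v"
  shows "(LBINT t:{u<..v}. ((t - u) / (v - u)) ^ k) = (v - u) / (real k + 1)"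
proof -
  define g where "g t = ((t - u) / (v - u)) ^ k" for t
  define G where "G t = (v - u) / (real k + 1) * ((t - u) / (v - u)) ^ (k + 1)" for t
  have gc: "continuous_on {u..v} g" unfolding g_def using uv by (auto intro!: continuous_intros)
  have gI: "set_integrable lborel {u..v} g" by (rule borel_integrable_atLeastAtMost'[OF gc])
  have GD: "(G has_real_derivative g t) (at t)" for t
  proof -
    have h: "((\<lambda>t. (t - u) / (v - u)) has_real_derivative 1 / (v - u)) (at t)"
      using uv by (auto intro!: derivative_eq_intros)
    have "((\<lambda>t. ((t - u) / (v - u)) ^ (k + 1)) has_real_derivative
        of_nat (k + 1) * (1 / (v - u) * ((t - u) / (v - u)) ^ (k + 1 - Suc 0))) (at t)"
      by (rule DERIV_power[OF h])
    then have "((\<lambda>t. (v - u) / (real k + 1) * ((t - u) / (v - u)) ^ (k + 1)) has_real_derivative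
        (v - u) / (real k + 1) * (of_nat (k + 1) * (1 / (v - u) * ((t - u) / (v - u)) ^ (k + 1 - Suc 0)))) (at t)"
      by (rule DERIV_cmult)
    moreover have e: "\<And>X::real. (v - u) / (real k + 1) * (of_nat (k + 1) * (1 / (v - u) * X)) = X"
    proof -
      fix X :: real
      have "(v - u) / (real k + 1) * (of_nat (k + 1) * (1 / (v - u) * X)) =
            ((v - u) / (v - u)) * ((real k + 1) / (real k + 1)) * X"
        by (simp add: add.commute)
      also have "\<dots> = X" using uv by simp
      finally show "(v - u) / (real k + 1) * (of_nat (k + 1) * (1 / (v - u) * X)) = X" .
    qed
    moreover have "(v - u) / (real k + 1) * (of_nat (k + 1) * (1 / (v - u) * ((t - u) / (v - u)) ^ (k + 1 - Suc 0)))
        = ((t - u) / (v - u)) ^ k"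
      by (simp only: e) simp
    ultimately show ?thesis unfolding G_def g_def by simp
  qed
  have "(g has_integral G v - G u) {u..v}"
    by (rule fundamental_theorem_of_calculus)
       (use uv GD in \<open>auto simp: has_real_derivative_iff_has_vector_derivative[symmetric] intro: has_field_derivative_at_within\<close>)
  then have i1: "(LBINT t:{u..v}. g t) = G v - G u"
    using set_borel_integral_eq_integral(2)[OF gI] by (simp add: integral_unique)
  have c: "(LBINT t:{u}. g t) = (LBINT t:{u}. g u)"
    by (rule set_lebesgue_integral_cong) auto
  have z: "(LBINT t:{u}. g t) = 0" unfolding c by (simp add: set_integral_const)
  have i2: "set_integrable lborel {u<..v} g" by (rule set_integrable_subset[OF gI]) auto
  have i3: "set_integrable lborel {u} g" by (rule set_integrable_subset[OF gI]) (use uv in auto)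
  have "{u..v} = {u<..v} \<union> {u}" using uv by auto
  then have "(LBINT t:{u..v}. g t) = (LBINT t:{u<..v}. g t) + (LBINT t:{u}. g t)"
    using set_integral_Un[of "{u<..v}" "{u}" lborel g] i2 i3 by auto
  then have "(LBINT t:{u<..v}. g t) = G v - G u" using z i1 by simp
  moreover have "G v - G u = (v - u) / (real k + 1)" unfolding G_def using uv by simp
  ultimately show ?thesis unfolding g_def by simp
qed


lemma forward_dir:
  fixes f F :: "real \<Rightarrow> real" and k :: nat
  assumes fpos: "\<And>x. f x \<ge> 0" and fmeas: "f \<in> borel_measurable borel"
    and fint: "\<And>a b. set_integrable lborel {a<..b} f"
    and Fint: "\<And>a b. a \<le> b \<Longrightarrow> (LBINT t:{a<..b}. f t) = F b - F a"
    and Fcont: "continuous_on UNIV F"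
    and k: "1 \<le> k"
    and l0: "lF F = ereal l0" and c: "c > 0"
    and Fform: "\<And>x. x \<ge> l0 \<Longrightarrow> F x = 1 - exp (- c * (x - l0))"
    and u: "l0 < u" and uv: "u < v"
  shows "rec_cond_exp F f k 1 u v = (u + real k * v) / (real k + 1)"
proof -
  have R: "recR F t = c * (t - l0)" if "t \<ge> l0" for t
    unfolding recR_def using Fform[OF that] by simp
  have Fv: "F v < 1" using Fform[of v] u uv by simp
  have Fuv: "F u < F v" using Fform[of v] Fform[of u] u uv c by simp
  have "rec_cond_exp F f k 1 u v =
     v - (LBINT t:{u<..v}. ((recR F t - recR F u) / (recR F v - recR F u)) ^ k)"
    by (rule exp_formula[OF fpos fmeas fint Fint Fcont k uv Fv Fuv])
  also have "(LBINT t:{u<..v}. ((recR F t - recR F u) / (recR F v - recR F u)) ^ k) =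
      (LBINT t:{u<..v}. ((t - u) / (v - u)) ^ k)"
  proof (rule set_lebesgue_integral_cong)
    show "{u<..v} \<in> sets lborel" by simp
    show "\<forall>x. x \<in> {u<..v} \<longrightarrow> ((recR F x - recR F u) / (recR F v - recR F u)) ^ k = ((x - u) / (v - u)) ^ k"
    proof (intro allI impI)
      fix x assume x: "x \<in> {u<..v}"
      have "(recR F x - recR F u) / (recR F v - recR F u) = (c * (x - u)) / (c * (v - u))"
      proof -
        have e: "recR F x = c * (x - l0)" "recR F u = c * (u - l0)" "recR F v = c * (v - l0)"
          using R x u uv by auto
        show ?thesis unfolding e by (simp add: algebra_simps)
      qed
      also have "\<dots> = (x - u) / (v - u)" using c by simp
      finally show "((recR F x - recR F u) / (recR F v - recR F u)) ^ k = ((x - u) / (v - u)) ^ k" by simp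
    qed
  qed
  also have "\<dots> = (v - u) / (real k + 1)" by (rule poly_int[OF uv])
  finally show ?thesis by (simp add: field_simps)
qed


lemma slope_const:
  fixes \<phi> :: "real \<Rightarrow> real" and k :: nat
  assumes k: "1 \<le> k" and ord: "u < v1" "v1 < v2" "v2 < b"
    and \<phi>c: "continuous_on {u..b} \<phi>" and \<phi>nn: "\<And>t. t \<in> {u..b} \<Longrightarrow> \<phi> t \<ge> 0"
    and Jeq: "\<And>x. x \<in> {v1..v2} \<Longrightarrow> integral {u..x} (\<lambda>t. \<phi> t ^ k) = (x - u) / (real k + 1) * \<phi> x ^ k"
  shows "\<phi> v1 / (v1 - u) = \<phi> v2 / (v2 - u)"
proof -
  define J where "J x = integral {u..x} (\<lambda>t. \<phi> t ^ k)" for x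
  have pc: "continuous_on {u..b} (\<lambda>t. \<phi> t ^ k)" using \<phi>c by (auto intro!: continuous_intros)
  have JD: "(J has_real_derivative \<phi> x ^ k) (at x)" if x: "u < x" "x < b" for x
  proof -
    have "(J has_vector_derivative \<phi> x ^ k) (at x within {u..b})"
      unfolding J_def by (rule integral_has_vector_derivative[OF pc]) (use x in auto)
    moreover have "at x within {u..b} = at x"
      by (rule at_within_interior) (use x in auto)
    ultimately show ?thesis by (simp add: has_real_derivative_iff_has_vector_derivative)
  qed
  define ch where "ch x = J x / (x - u) ^ (k + 1)" for x
  have PD: "((\<lambda>x. (x - u) ^ (k + 1)) has_real_derivative real (k + 1) * (x - u) ^ k) (at x)" for x
  proof -
    have h: "((\<lambda>x. x - u) has_real_derivative 1) (at x)" by (auto intro!: derivative_eq_intros)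
    show ?thesis using DERIV_power[OF h, of "k + 1"] by simp
  qed
  have chD: "(ch has_real_derivative
      (\<phi> x ^ k * (x - u) ^ (k + 1) - real (k + 1) * (x - u) ^ k * J x) / ((x - u) ^ (k + 1)) ^ Suc (Suc 0)) (at x)"
    if x: "u < x" "x < b" for x
    unfolding ch_def by (rule DERIV_quotient[OF JD[OF x] PD]) (use x in simp)
  have chD0: "(ch has_real_derivative 0) (at x)" if x: "v1 < x" "x < v2" for x
  proof -
    have eJ: "J x = (x - u) / (real k + 1) * \<phi> x ^ k" unfolding J_def using Jeq x by auto
    have N0: "\<phi> x ^ k * (x - u) ^ (k + 1) - real (k + 1) * (x - u) ^ k * J x = 0"
      unfolding eJ by (simp add: field_simps)
    have d: "(ch has_real_derivative (\<phi> x ^ k * (x - u) ^ (k + 1) - real (k + 1) * (x - u) ^ k * J x) / ((x - u) ^ (k + 1)) ^ Suc (Suc 0)) (at x)"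
      by (rule chD) (use x ord in auto)
    then show ?thesis using d unfolding N0 by simp
  qed
  have chc: "continuous_on {v1..v2} ch"
  proof (intro continuous_at_imp_continuous_on ballI)
    fix x assume x: "x \<in> {v1..v2}"
    show "isCont ch x" by (rule DERIV_isCont[OF chD]) (use x ord in auto)
  qed
  have "ch v2 = ch v1" by (rule DERIV_isconst2[OF ord(2) chc chD0]) (use ord in auto)
  moreover have "ch x = (\<phi> x / (x - u)) ^ k / (real k + 1)" if "x \<in> {v1..v2}" for x
  proof -
    have xu: "x - u > 0" using that ord by auto
    have "ch x = (x - u) / (real k + 1) * \<phi> x ^ k / (x - u) ^ (k + 1)"
      unfolding ch_def J_def using Jeq that by simp
    also have "\<dots> = (\<phi> x / (x - u)) ^ k / (real k + 1)"
    proof -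
      have gen: "\<And>T P. T > 0 \<Longrightarrow> T / (real k + 1) * P / T ^ (k + 1) = P / T ^ k / (real k + 1)"
      proof -
        fix T P :: real assume T: "T > 0"
        have c: "real k + 1 > 0" by simp
        have "T / (real k + 1) * P / T ^ (k + 1) = (T / T) * (P / T ^ k / (real k + 1))"
          by (simp add: power_add)
        then show "T / (real k + 1) * P / T ^ (k + 1) = P / T ^ k / (real k + 1)" using T by simp
      qed
      show ?thesis using gen[OF xu, of "\<phi> x ^ k"] by (simp add: power_divide)
    qed
    finally show ?thesis .
  qed
  ultimately have eq: "(\<phi> v1 / (v1 - u)) ^ k / (real k + 1) = (\<phi> v2 / (v2 - u)) ^ k / (real k + 1)"
    using ord by (metis atLeastAtMost_iff less_imp_le order_refl)
  then have eq2: "(\<phi> v1 / (v1 - u)) ^ k = (\<phi> v2 / (v2 - u)) ^ k"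
    by (metis add_nonneg_pos divide_cancel_right less_numeral_extra(3) of_nat_0_le_iff zero_less_one)
  have nn1: "\<phi> v1 / (v1 - u) \<ge> 0" using \<phi>nn[of v1] ord by simp
  have nn2: "\<phi> v2 / (v2 - u) \<ge> 0" using \<phi>nn[of v2] ord by simp
  have k0: "0 < k" using k by simp
  show ?thesis using power_eq_iff_eq_base[OF k0 nn1 nn2] eq2 by simp
qed


lemma lim_left_le:
  fixes g :: "real \<Rightarrow> real"
  assumes "isCont g x" "b < x" "\<And>y. b < y \<Longrightarrow> y < x \<Longrightarrow> g y \<le> c"
  shows "g x \<le> c"
proof (rule tendsto_upperbound)
  show "(g \<longlongrightarrow> g x) (at_left x)"
    using assms(1) unfolding isCont_def by (rule tendsto_within_subset) auto
  show "\<forall>\<^sub>F y in at_left x. g y \<le> c"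
    using eventually_at_left_real[OF assms(2)] by eventually_elim (use assms(3) in auto)
qed simp

lemma lim_right_le:
  fixes g :: "real \<Rightarrow> real"
  assumes "isCont g x" "x < b" "\<And>y. x < y \<Longrightarrow> y < b \<Longrightarrow> g y \<le> c"
  shows "g x \<le> c"
proof (rule tendsto_upperbound)
  show "(g \<longlongrightarrow> g x) (at_right x)"
    using assms(1) unfolding isCont_def by (rule tendsto_within_subset) auto
  show "\<forall>\<^sub>F y in at_right x. g y \<le> c"
    using eventually_at_right_real[OF assms(2)] by eventually_elim (use assms(3) in auto)
qed simp

lemma lim_left_ge:
  fixes g :: "real \<Rightarrow> real"
  assumes "isCont g x" "b < x" "\<And>y. b < y \<Longrightarrow> y < x \<Longrightarrow> g y \<ge> c"
  shows "g x \<ge> c"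
  using lim_left_le[where g="\<lambda>y. - g y" and x=x and b=b and c="- c"] assms by (auto intro!: continuous_intros)

lemma lim_right_ge:
  fixes g :: "real \<Rightarrow> real"
  assumes "isCont g x" "x < b" "\<And>y. x < y \<Longrightarrow> y < b \<Longrightarrow> g y \<ge> c"
  shows "g x \<ge> c"
  using lim_right_le[where g="\<lambda>y. - g y" and x=x and b=b and c="- c"] assms by (auto intro!: continuous_intros)

lemma Icc_Ioc_int:
  fixes g :: "real \<Rightarrow> real"
  assumes gI: "set_integrable lborel {u..v} g" and uv: "u < v"
  shows "(LBINT t:{u..v}. g t) = (LBINT t:{u<..v}. g t)"
proof -
  have c: "(LBINT t:{u}. g t) = (LBINT t:{u}. g u)"
    by (rule set_lebesgue_integral_cong) auto
  have z: "(LBINT t:{u}. g t) = 0" unfolding c by (simp add: set_integral_const)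
  have i2: "set_integrable lborel {u<..v} g" by (rule set_integrable_subset[OF gI]) auto
  have i3: "set_integrable lborel {u} g" by (rule set_integrable_subset[OF gI]) (use uv in auto)
  have "{u..v} = {u<..v} \<union> {u}" using uv by auto
  then have "(LBINT t:{u..v}. g t) = (LBINT t:{u<..v}. g t) + (LBINT t:{u}. g t)"
    using set_integral_Un[of "{u<..v}" "{u}" lborel g] i2 i3 by auto
  then show ?thesis using z by simp
qed


lemma converse_dir:
  fixes f F :: "real \<Rightarrow> real" and k :: nat
  assumes fpos: "\<And>x. f x \<ge> 0" and fmeas: "f \<in> borel_measurable borel"
    and fint: "\<And>a b. set_integrable lborel {a<..b} f"
    and Fint: "\<And>a b. a \<le> b \<Longrightarrow> (LBINT t:{a<..b}. f t) = F b - F a"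
    and Fcont: "continuous_on UNIV F"
    and Fbot: "(F \<longlongrightarrow> 0) at_bot" and Ftop: "(F \<longlongrightarrow> 1) at_top"
    and F0: "\<And>x. 0 \<le> F x" and F1: "\<And>x. F x \<le> 1"
    and k: "1 \<le> k"
    and H: "\<forall>u v. lF F < ereal u \<and> u < v \<and> ereal v < rF F \<longrightarrow>
            rec_cond_exp F f k 1 u v = (u + real k * v) / (real k + 1)"
  shows "lF F > -\<infinity> \<and> rF F = \<infinity> \<and>
          (\<exists>c>0. \<forall>x. ereal x \<ge> lF F \<longrightarrow>
              F x = 1 - exp (- c * (x - real_of_ereal (lF F))))"
proof -
  have Fmono: "\<And>a b. a \<le> b \<Longrightarrow> F a \<le> F b"
    using Fmono_lemma[OF fpos Fint] by blast
  have Fisc: "isCont F x" for x using Fcont by (simp add: continuous_on_eq_continuous_at)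
  define l where "l = lF F"
  define r where "r = rF F"
  define R where "R = recR F"
  have H': "rec_cond_exp F f k 1 u v = (u + real k * v) / (real k + 1)"
    if "l < ereal u" "u < v" "ereal v < r" for u v
    using H that unfolding l_def r_def by blast
  have Flt1: "F x < 1" if "ereal x < r" for x using rF_less_lt1[of F x] Fmono that unfolding r_def by blast
  have Rcont: "isCont R x" if "F x < 1" for x
    unfolding R_def recR_def using that Fisc[of x] by (auto intro!: continuous_intros)
  have Rmono: "R a \<le> R b" if "a \<le> b" "F b < 1" for a b
    unfolding R_def recR_def using that Fmono[OF that(1)] by simp
  have Rnn: "R x \<ge> 0" if "F x < 1" for x
    unfolding R_def recR_def using that F0[of x] by simp
  have FR: "F x = 1 - exp (- R x)" if "F x < 1" for x
    unfolding R_def recR_def using that by simp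
  obtain a0 where a0: "F a0 < 1/2"
    using order_tendstoD(2)[OF Fbot, of "1/2"] by (auto simp: eventually_at_bot_linorder)
  obtain b0 where b0: "F b0 > 1/2"
    using order_tendstoD(1)[OF Ftop, of "1/2"] by (auto simp: eventually_at_top_linorder)
  have "a0 \<le> b0" using a0 b0 Fmono[of b0 a0] by (cases "a0 \<le> b0") auto
  then obtain u0 where u0F: "F u0 = 1/2"
    using IVT[of F a0 "1/2" b0] a0 b0 Fisc by auto
  have lu0: "l < ereal u0"
  proof (rule ccontr)
    assume "\<not> l < ereal u0"
    moreover have "l \<le> ereal u0" unfolding l_def using lF_le[of F u0] u0F by simp
    ultimately have "l = ereal u0" by simp
    then have Fz: "F y = 0" if "y < u0" for y using lF_less_zero[of F y] F0 that unfolding l_def by auto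
    have "F u0 \<le> 0"
      by (rule lim_left_le[where g=F and x=u0 and b="u0 - 1" and c=0]) (simp_all add: Fisc Fz)
    then show False using u0F by simp
  qed
  have u0r: "ereal u0 < r"
  proof (rule ccontr)
    assume "\<not> ereal u0 < r"
    moreover have "ereal u0 \<le> r" unfolding r_def using rF_ge[of F u0] u0F by simp
    ultimately have "r = ereal u0" by simp
    then have Fo: "F y = 1" if "y > u0" for y using rF_gt_one[of F y] F1 that unfolding r_def by auto
    have "F u0 \<ge> 1"
      by (rule lim_right_ge[where g=F and x=u0 and b="u0 + 1" and c=1]) (simp_all add: Fisc Fo)
    then show False using u0F by simp
  qed
  have Fstrict: "F u < F v" if uv: "l < ereal u" "u < v" "ereal v < r" for u v
  proof (rule ccontr)
    assume "\<not> F u < F v"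
    then have eq: "F u = F v" using Fmono[of u v] uv by simp
    have zero: "rec_cond_exp F f k 1 u w = 0" if w: "u < w" "w \<le> v" for w
    proof -
      have "F w = F u" using Fmono[of u w] Fmono[of w v] w eq by simp
      then have "recR F w - recR F u = 0" unfolding recR_def by simp
      then show ?thesis unfolding rec_cond_exp_def rec_cond_density_def by simp
    qed
    have "ereal ((u + v) / 2) < ereal v" using uv by simp
    then have "ereal ((u + v) / 2) < r" using uv(3) by (rule less_trans)
    then have h1: "(u + real k * ((u + v) / 2)) / (real k + 1) = 0"
      using H'[of u "(u + v) / 2"] zero[of "(u + v) / 2"] uv by simp
    have h2: "(u + real k * v) / (real k + 1) = 0"
      using H'[of u v] zero[of v] uv by simp
    have d: "real k + 1 \<noteq> 0" by (simp add: add_nonneg_eq_0_iff)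
    have e1: "u + real k * ((u + v) / 2) = 0" using h1 d by simp
    have e2: "u + real k * v = 0" using h2 d by simp
    have "real k * (v - u) = 2 * ((u + real k * v) - (u + real k * ((u + v) / 2)))"
      by (simp add: algebra_simps)
    then have "real k * (v - u) = 0" using e1 e2 by simp
    then show False using k uv by simp
  qed
  have Flt1': "F t < 1" if "t \<le> x" "ereal x < r" for t x
    using Fmono[OF that(1)] Flt1[OF that(2)] by simp
  have IntId: "(LBINT t:{u<..v}. (R t - R u) ^ k) = (v - u) / (real k + 1) * (R v - R u) ^ k"
    if uv: "l < ereal u" "u < v" "ereal v < r" for u v
  proof -
    have Fv: "F v < 1" using Flt1 uv by simp
    have Fuv: "F u < F v" using Fstrict uv by simp
    define D where "D = R v - R u"
    have D: "D > 0" unfolding D_def R_def recR_def using Fv Fuv by simp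
    have E: "rec_cond_exp F f k 1 u v = v - (LBINT t:{u<..v}. ((R t - R u) / D) ^ k)"
      unfolding R_def D_def by (rule exp_formula[OF fpos fmeas fint Fint Fcont k uv(2) Fv Fuv])
    have "(LBINT t:{u<..v}. ((R t - R u) / D) ^ k) = (LBINT t:{u<..v}. (1 / D ^ k) * (R t - R u) ^ k)"
      by (simp add: power_divide)
    also have "\<dots> = (1 / D ^ k) * (LBINT t:{u<..v}. (R t - R u) ^ k)"
      by (rule set_integral_mult_right)
    finally have E2: "v - (1 / D ^ k) * (LBINT t:{u<..v}. (R t - R u) ^ k) = (u + real k * v) / (real k + 1)"
      using E H'[OF uv] by simp
    have Dk: "D ^ k > 0" using D by simp
    have "(LBINT t:{u<..v}. (R t - R u) ^ k) = D ^ k * ((1 / D ^ k) * (LBINT t:{u<..v}. (R t - R u) ^ k))"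
      using D by simp
    also have "(1 / D ^ k) * (LBINT t:{u<..v}. (R t - R u) ^ k) = v - (u + real k * v) / (real k + 1)"
      using E2 by linarith
    finally have "(LBINT t:{u<..v}. (R t - R u) ^ k) = D ^ k * (v - (u + real k * v) / (real k + 1))" .
    also have "v - (u + real k * v) / (real k + 1) = (v - u) / (real k + 1)"
      by (simp add: field_simps)
    finally show ?thesis unfolding D_def by simp
  qed
  have Jeq: "integral {u..x} (\<lambda>t. (R t - R u) ^ k) = (x - u) / (real k + 1) * (R x - R u) ^ k"
    if ux: "l < ereal u" "u < x" "ereal x < r" for u x
  proof -
    have c: "continuous_on {u..x} (\<lambda>t. (R t - R u) ^ k)"
      by (intro continuous_at_imp_continuous_on ballI continuous_intros Rcont Flt1') (use ux in auto)
    have I: "set_integrable lborel {u..x} (\<lambda>t. (R t - R u) ^ k)"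
      by (rule borel_integrable_atLeastAtMost'[OF c])
    have "integral {u..x} (\<lambda>t. (R t - R u) ^ k) = (LBINT t:{u..x}. (R t - R u) ^ k)"
      using set_borel_integral_eq_integral(2)[OF I] by simp
    also have "\<dots> = (LBINT t:{u<..x}. (R t - R u) ^ k)" by (rule Icc_Ioc_int[OF I ux(2)])
    also have "\<dots> = (x - u) / (real k + 1) * (R x - R u) ^ k" by (rule IntId[OF ux])
    finally show ?thesis .
  qed
  have slope: "(R v1 - R u) / (v1 - u) = (R v2 - R u) / (v2 - u)"
    if o: "l < ereal u" "u < v1" "v1 < v2" "ereal v2 < r" for u v1 v2
  proof -
    obtain b where b: "ereal v2 < ereal b" "ereal b < r" using ereal_dense2[OF o(4)] by blast
    show ?thesis
    proof (rule slope_const[where \<phi>="\<lambda>t. R t - R u" and b=b, OF k o(2) o(3)])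
      show "v2 < b" using b by simp
      show "continuous_on {u..b} (\<lambda>t. R t - R u)"
        by (intro continuous_at_imp_continuous_on ballI continuous_intros Rcont Flt1') (use b in auto)
      show "\<And>t. t \<in> {u..b} \<Longrightarrow> R t - R u \<ge> 0"
        using Rmono Flt1' b by auto
      show "\<And>x. x \<in> {v1..v2} \<Longrightarrow> integral {u..x} (\<lambda>t. (R t - R u) ^ k) = (x - u) / (real k + 1) * (R x - R u) ^ k"
      proof -
        fix x assume x: "x \<in> {v1..v2}"
        have "ereal x < r" using x o(4) by (meson atLeastAtMost_iff ereal_less_eq(3) order.strict_trans1)
        then show "integral {u..x} (\<lambda>t. (R t - R u) ^ k) = (x - u) / (real k + 1) * (R x - R u) ^ k"
          using Jeq[of u x] o x by auto
      qed
    qed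
  qed
  obtain v0 where v0: "ereal u0 < ereal v0" "ereal v0 < r" using ereal_dense2[OF u0r] by blast
  have u0v0: "u0 < v0" using v0 by simp
  define a where "a = (R v0 - R u0) / (v0 - u0)"
  have apos: "a > 0"
  proof -
    have "F u0 < F v0" using Fstrict[OF lu0 u0v0 v0(2)] .
    moreover have "F v0 < 1" using Flt1[OF v0(2)] .
    ultimately have "R u0 < R v0" unfolding R_def recR_def by simp
    then show ?thesis unfolding a_def using u0v0 by simp
  qed
  have sl: "(R x - R u) / (x - u) = (R y - R u) / (y - u)"
    if o: "l < ereal u" "u < x" "u < y" "ereal x < r" "ereal y < r" for u x y
  proof (cases x y rule: linorder_cases)
    case less then show ?thesis using slope[OF o(1) o(2) less o(5)] by simp
  next
    case equal then show ?thesis by simp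
  next
    case greater then show ?thesis using slope[OF o(1) o(3) greater o(4)] by simp
  qed
  have lin_right: "R x = R u0 + a * (x - u0)" if x: "u0 < x" "ereal x < r" for x
  proof -
    have "(R x - R u0) / (x - u0) = a" unfolding a_def using sl[OF lu0 x(1) u0v0 x(2) v0(2)] .
    then show ?thesis using x(1) by (simp add: field_simps)
  qed
  have lin_left: "R x = R u0 + a * (x - u0)" if x: "l < ereal x" "x < u0" for x
  proof -
    define b where "b = (R u0 - R x) / (u0 - x)"
    have xv0: "x < v0" using x u0v0 by simp
    have eqb: "(R v0 - R x) / (v0 - x) = b" unfolding b_def using sl[OF x(1) xv0 x(2) v0(2) u0r] .
    have e1: "R u0 - R x = b * (u0 - x)" unfolding b_def using x(2) by simp
    have e2: "R v0 - R x = b * (v0 - x)" using eqb xv0 by (simp add: field_simps)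
    have e3: "R v0 - R u0 = a * (v0 - u0)" unfolding a_def using u0v0 by simp
    have "b * (v0 - u0) = a * (v0 - u0)"
    proof -
      have "b * (v0 - u0) = b * (v0 - x) - b * (u0 - x)" by (simp add: algebra_simps)
      then show ?thesis using e1 e2 e3 by simp
    qed
    then have "b = a" using u0v0 by simp
    then show ?thesis using e1 by (simp add: algebra_simps)
  qed
  have lin: "R x = R u0 + a * (x - u0)" if x: "l < ereal x" "ereal x < r" for x
  proof (cases x u0 rule: linorder_cases)
    case less then show ?thesis using lin_left x by simp
  next
    case equal then show ?thesis by simp
  next
    case greater then show ?thesis using lin_right x by simp
  qed
  have lfin: "l \<noteq> -\<infinity>"
  proof
    assume linf: "l = -\<infinity>"
    define x where "x = u0 - (R u0 + 1) / a"
    have Ru0: "R u0 \<ge> 0" using Rnn Flt1[OF u0r] by simp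
    have "(R u0 + 1) / a > 0" using Ru0 apos by simp
    then have xu0: "x < u0" unfolding x_def by simp
    have xr: "ereal x < r" using xu0 u0r by (meson ereal_less_eq(3) less_imp_le order.strict_trans1)
    have "R x = R u0 + a * (x - u0)" by (rule lin) (use linf xr in auto)
    also have "\<dots> = -1" unfolding x_def using apos by (simp add: field_simps)
    finally have "R x = -1" .
    moreover have "R x \<ge> 0" using Rnn Flt1[OF xr] by simp
    ultimately show False by simp
  qed
  obtain l0 where l0: "l = ereal l0"
    using lfin lu0 by (cases l) auto
  have rinf: "r = \<infinity>"
  proof (rule ccontr)
    assume rn: "r \<noteq> \<infinity>"
    obtain r0 where r0: "r = ereal r0" using rn u0r by (cases r) auto
    have u0r0: "u0 < r0" using u0r r0 by simp
    have Fr0: "F r0 \<ge> 1"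
    proof (rule lim_right_ge[where g=F and x=r0 and b="r0 + 1" and c=1])
      show "isCont F r0" by (rule Fisc)
      show "r0 < r0 + 1" by simp
      fix y assume "r0 < y" "y < r0 + 1"
      then show "F y \<ge> 1" using rF_gt_one[of F y] F1 r0 unfolding r_def by auto
    qed
    define B where "B = R u0 + a * (r0 - u0)"
    have "F r0 \<le> 1 - exp (- B)"
    proof (rule lim_left_le[where g=F and x=r0 and b=u0 and c="1 - exp (- B)"])
      show "isCont F r0" by (rule Fisc)
      show "u0 < r0" by (rule u0r0)
      fix y assume y: "u0 < y" "y < r0"
      then have yr: "ereal y < r" using r0 by simp
      have "R y = R u0 + a * (y - u0)" using lin_right[OF y(1) yr] .
      also have "\<dots> \<le> B" unfolding B_def using apos y by simp
      finally have "R y \<le> B" .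
      then have "exp (- B) \<le> exp (- R y)" by simp
      then show "F y \<le> 1 - exp (- B)" using FR[OF Flt1[OF yr]] by simp
    qed
    then show False using Fr0 exp_gt_zero[of "- B"] by linarith
  qed
  have Fl0: "F l0 = 0"
  proof -
    have "F l0 \<le> 0"
    proof (rule lim_left_le[where g=F and x=l0 and b="l0 - 1" and c=0])
      show "isCont F l0" by (rule Fisc)
      show "l0 - 1 < l0" by simp
      fix y assume "l0 - 1 < y" "y < l0"
      then show "F y \<le> 0" using lF_less_zero[of F y] F0 l0 unfolding l_def by auto
    qed
    then show ?thesis using F0[of l0] by simp
  qed
  have Rl0: "R l0 = 0" unfolding R_def recR_def using Fl0 by simp
  have l0u0: "l0 < u0" using lu0 l0 by simp
  define d where "d y = R y - (R u0 + a * (y - u0))" for y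
  have dc: "isCont d l0" unfolding d_def
    by (intro continuous_intros Rcont) (simp add: Fl0)
  have dz: "d y = 0" if "l0 < y" "y < u0" for y
  proof -
    have "l < ereal y" using that l0 by simp
    moreover have "ereal y < r" using that rinf by simp
    ultimately show ?thesis unfolding d_def using lin by simp
  qed
  have "d l0 \<le> 0" by (rule lim_right_le[where g=d and x=l0 and b=u0 and c=0]) (use dc l0u0 dz in auto)
  moreover have "d l0 \<ge> 0" by (rule lim_right_ge[where g=d and x=l0 and b=u0 and c=0]) (use dc l0u0 dz in auto)
  ultimately have "d l0 = 0" by simp
  then have Ru0: "R u0 = a * (u0 - l0)" unfolding d_def using Rl0 by (simp add: algebra_simps)
  have final: "F x = 1 - exp (- a * (x - l0))" if x: "l0 \<le> x" for x
  proof (cases "x = l0")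
    case True then show ?thesis using Fl0 by simp
  next
    case False
    then have xl: "l < ereal x" using x l0 by simp
    have xr: "ereal x < r" using rinf by simp
    have "R x = a * (x - l0)" using lin[OF xl xr] Ru0 by (simp add: algebra_simps)
    then show ?thesis using FR[OF Flt1[OF xr]] by simp
  qed
  show ?thesis
  proof (intro conjI exI[of _ a] allI impI apos)
    show "- \<infinity> < lF F" using l0 unfolding l_def by simp
    show "rF F = \<infinity>" using rinf unfolding r_def .
    fix x assume "lF F \<le> ereal x"
    then have "l0 \<le> x" using l0 unfolding l_def by simp
    moreover have "real_of_ereal (lF F) = l0" using l0 unfolding l_def by simp
    ultimately show "F x = 1 - exp (- a * (x - real_of_ereal (lF F)))" using final by simp
  qed
qed


theorem mainTheorem3:
  fixes M :: "'a measure" and X :: "'a \<Rightarrow> real" and f :: "real \<Rightarrow> real"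
    and F :: "real \<Rightarrow> real" and n k :: nat
  assumes "prob_space M"
    and "distributed M lborel X (\<lambda>x. ennreal (f x))"
    and "\<And>x. f x \<ge> 0"
    and "F = cdf (distr M borel X)"
    and "n \<ge> 2" and "1 \<le> k" and "k \<le> n - 1"
  shows "(\<forall>u v. lF F < ereal u \<and> u < v \<and> ereal v < rF F \<longrightarrow>
            rec_cond_exp F f k 1 u v = (u + real k * v) / (real k + 1))
         \<longleftrightarrow>
         (lF F > -\<infinity> \<and> rF F = \<infinity> \<and>
          (\<exists>c>0. \<forall>x. ereal x \<ge> lF F \<longrightarrow>
              F x = 1 - exp (- c * (x - real_of_ereal (lF F)))))"
proof -
  note S = setup_lemma[OF assms(1) assms(2) assms(3) assms(4)]
  have k: "1 \<le> k" by (rule assms(6))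
  show ?thesis
  proof
    assume H: "\<forall>u v. lF F < ereal u \<and> u < v \<and> ereal v < rF F \<longrightarrow>
            rec_cond_exp F f k 1 u v = (u + real k * v) / (real k + 1)"
    show "lF F > -\<infinity> \<and> rF F = \<infinity> \<and>
          (\<exists>c>0. \<forall>x. ereal x \<ge> lF F \<longrightarrow>
              F x = 1 - exp (- c * (x - real_of_ereal (lF F))))"
      by (rule converse_dir[OF assms(3) S(1) S(2) S(3) S(4) S(5) S(6) S(7) S(8) k H])
  next
    assume R: "lF F > -\<infinity> \<and> rF F = \<infinity> \<and>
          (\<exists>c>0. \<forall>x. ereal x \<ge> lF F \<longrightarrow>
              F x = 1 - exp (- c * (x - real_of_ereal (lF F))))"
    then obtain c where c: "c > 0" and cF: "\<forall>x. ereal x \<ge> lF F \<longrightarrow>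
              F x = 1 - exp (- c * (x - real_of_ereal (lF F)))" by blast
    show "\<forall>u v. lF F < ereal u \<and> u < v \<and> ereal v < rF F \<longrightarrow>
            rec_cond_exp F f k 1 u v = (u + real k * v) / (real k + 1)"
    proof (intro allI impI)
      fix u v assume uv: "lF F < ereal u \<and> u < v \<and> ereal v < rF F"
      obtain l0 where l0: "lF F = ereal l0" using R uv by (cases "lF F") auto
      have Fform: "F x = 1 - exp (- c * (x - l0))" if "x \<ge> l0" for x
        using cF that l0 by simp
      show "rec_cond_exp F f k 1 u v = (u + real k * v) / (real k + 1)"
        by (rule forward_dir[OF assms(3) S(1) S(2) S(3) S(4) k l0 c Fform]) (use uv l0 in auto)
    qed
  qed
qed

end
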